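(* Let $d\in\mathbb{N}$ and $\beta_1,\ldots,\beta_d\in\mathbb{R}$. The multi-indexed sequence $$\bar F_{n_1,\ldots,n_d}=\prod_{k=1}^d\beta_k^{n_{(d-k+1)}-n_{(d-k)}},\qquad n_1,\ldots,n_d\in\mathbb{N}_0,$$ is a $d$-dimensional discrete survival function (i.e. there is an $\mathbb{N}^d$-valued random vector $(\tau_1,\ldots,\tau_d)$ with $\bar F_{n_1,\ldots,n_d}=\mathbb{P}(\tau_1>n_1,\ldots,\tau_d>n_d)$ for all $n_i\in\mathbb{N}_0$) if and only if $(1,\beta_1,\ldots,\beta_d)\in\mathcal{M}_{d+1}$. In that case it is the survival function of an exchangeable $d$-variate wide-sense geometric law.
   Context: $\mathbb{N}=\{1,2,\ldots\}$, $\mathbb{N}_0=\{0\}\cup\mathbb{N}$; $n_{(0)}:=0\le n_{(1)}\le\cdots\le n_{(d)}$ is the ordered list of $n_1,\ldots,n_d$; $0^0:=1$. $\nabla^jx_k:=\sum_{i=0}^j(-1)^i\binom{j}{i}x_{k+i}$. $\mathcal{M}_{d+1}$ is the set of $(x_0,\ldots,x_d)\in\mathbb{R}^{d+1}$ with $x_0=1$, $x_1<1$, and $\nabla^jx_k\ge0$ for $k=0,\ldots,d$, $j=0,\ldots,d-k$. Wide-sense geometric law: for $\tilde p_I\in[0,1]$, $I\subseteq\{1,\ldots,d\}$, $\sum_I\tilde p_I=1$, $\sum_{I\not\ni k}\tilde p_I<1$ for all $k$, run i.i.d. trials with outcome $I$ of probability $\tilde p_I$, let $\tilde E_I$ be the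 first trial with outcome $I$, and $\tau_k=\min\{\tilde E_I:k\in I\}$. *)

theory Defs
  imports "HOL-Probability.Probability"
begin

definition ord_stat :: "nat \<Rightarrow> (nat \<Rightarrow> nat) \<Rightarrow> nat \<Rightarrow> nat" where
  "ord_stat d n j = (if j = 0 then 0 else sort (map n [1..<d+1]) ! (j - 1))"

definition Fbar :: "nat \<Rightarrow> (nat \<Rightarrow> real) \<Rightarrow> (nat \<Rightarrow> nat) \<Rightarrow> real" where
  "Fbar d \<beta> n = (\<Prod>k=1..d. \<beta> k ^ (ord_stat d n (d - k + 1) - ord_stat d n (d - k)))"

definition nabla :: "nat \<Rightarrow> (nat \<Rightarrow> real) \<Rightarrow> nat \<Rightarrow> real" where
  "nabla j x k = (\<Sum>i=0..j. (-1) ^ i * real (j choose i) * x (k + i))"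

definition in_M :: "nat \<Rightarrow> (nat \<Rightarrow> real) \<Rightarrow> bool" where
  "in_M d x \<longleftrightarrow> x 0 = 1 \<and> x 1 < 1 \<and>
     (\<forall>k\<le>d. \<forall>j\<le>d - k. nabla j x k \<ge> 0)"

definition is_discrete_survival :: "nat \<Rightarrow> ((nat \<Rightarrow> nat) \<Rightarrow> real) \<Rightarrow> bool" where
  "is_discrete_survival d F \<longleftrightarrow>
     (\<exists>P :: (nat \<Rightarrow> nat) pmf.
        set_pmf P \<subseteq> {t. (\<forall>i\<in>{1..d}. 1 \<le> t i) \<and> (\<forall>i. i \<notin> {1..d} \<longrightarrow> t i = 0)} \<and>
        (\<forall>n. measure_pmf.prob P {t. \<forall>i\<in>{1..d}. n i < t i} = F n))"

(* wide-sense geometric law: parameters p_I = pmf q I, I \<subseteq> {1..d}, summing to 1,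
   with sum_{I not containing k} p_I < 1 for all k *)
definition wsg_params :: "nat \<Rightarrow> nat set pmf \<Rightarrow> bool" where
  "wsg_params d q \<longleftrightarrow> set_pmf q \<subseteq> Pow {1..d} \<and>
     (\<forall>k\<in>{1..d}. measure_pmf.prob q {I. k \<notin> I} < 1)"

definition wsg_exchangeable :: "nat \<Rightarrow> nat set pmf \<Rightarrow> bool" where
  "wsg_exchangeable d q \<longleftrightarrow>
     (\<forall>I J. I \<subseteq> {1..d} \<longrightarrow> J \<subseteq> {1..d} \<longrightarrow> card I = card J \<longrightarrow> pmf q I = pmf q J)"

(* i.i.d. trials omega = (omega!!0, omega!!1, ...) (trial number t+1 is omega!!t);
   tau_k = index of the first trial whose outcome I contains k (= infinity if none) *)
definition wsg_tau :: "nat set stream \<Rightarrow> nat \<Rightarrow> enat" where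
  "wsg_tau \<omega> k = (if \<exists>t. k \<in> \<omega> !! t then enat (Suc (LEAST t. k \<in> \<omega> !! t)) else \<infinity>)"

definition wsg_survival :: "nat \<Rightarrow> nat set pmf \<Rightarrow> (nat \<Rightarrow> nat) \<Rightarrow> real" where
  "wsg_survival d q n = measure (stream_space (measure_pmf q))
     {\<omega> \<in> space (stream_space (measure_pmf q)). \<forall>k\<in>{1..d}. enat (n k) < wsg_tau \<omega> k}"

end

theory Submission
  imports Defs
begin


lemma nabla_Suc: "nabla (Suc j) x k = nabla j x k - nabla j x (Suc k)"
proof -
  have A: "nabla (Suc j) x k = x k + (\<Sum>i=0..j. (-1)^(Suc i) * real (Suc j choose Suc i) * x (k + Suc i))"
    unfolding nabla_def by (subst sum.atLeast0_atMost_Suc_shift) simp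
  have B: "(\<Sum>i=0..j. (-1)^(Suc i) * real (Suc j choose Suc i) * x (k + Suc i))
     = - (\<Sum>i=0..j. (-1)^i * real (j choose i) * x (Suc k + i))
       + (\<Sum>i=0..j. (-1)^(Suc i) * real (j choose Suc i) * x (k + Suc i))"
    by (simp add: sum_negf[symmetric] sum.distrib[symmetric] algebra_simps)
  have C: "nabla j x k = x k + (\<Sum>i=0..j. (-1)^(Suc i) * real (j choose Suc i) * x (k + Suc i))"
  proof (cases j)
    case 0 then show ?thesis by (simp add: nabla_def)
  next
    case (Suc j')
    have "nabla j x k = x k + (\<Sum>i=0..j'. (-1)^(Suc i) * real (j choose Suc i) * x (k + Suc i))"
      unfolding nabla_def Suc by (subst sum.atLeast0_atMost_Suc_shift) simp
    also have "(\<Sum>i=0..j'. (-1)^(Suc i) * real (j choose Suc i) * x (k + Suc i))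
       = (\<Sum>i=0..j. (-1)^(Suc i) * real (j choose Suc i) * x (k + Suc i))"
      unfolding Suc by (subst sum.atLeast0_atMost_Suc) (simp add: binomial_eq_0)
    finally show ?thesis .
  qed
  show ?thesis using A B C by (simp add: nabla_def)
qed

lemma nabla_0[simp]: "nabla 0 x k = x k"
  by (simp add: nabla_def)

lemma binom_inv: "(\<Sum>i=0..r. real (r choose i) * nabla i x (k + r - i)) = x k"
proof (induction r arbitrary: k)
  case 0 then show ?case by simp
next
  case (Suc r)
  have "(\<Sum>i=0..Suc r. real (Suc r choose i) * nabla i x (k + Suc r - i))
      = nabla 0 x (k + Suc r) + (\<Sum>i=0..r. real (Suc r choose Suc i) * nabla (Suc i) x (k + r - i))"
    by (subst sum.atLeast0_atMost_Suc_shift) simp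
  also have "(\<Sum>i=0..r. real (Suc r choose Suc i) * nabla (Suc i) x (k + r - i))
     = (\<Sum>i=0..r. real (r choose i) * nabla (Suc i) x (k + r - i))
       + (\<Sum>i=0..r. real (r choose Suc i) * nabla (Suc i) x (k + r - i))"
    by (simp add: sum.distrib[symmetric] algebra_simps)
  also have "(\<Sum>i=0..r. real (r choose i) * nabla (Suc i) x (k + r - i))
     = (\<Sum>i=0..r. real (r choose i) * nabla i x (k + r - i))
       - (\<Sum>i=0..r. real (r choose i) * nabla i x (Suc k + r - i))"
    by (simp add: sum_subtractf[symmetric] nabla_Suc algebra_simps Suc_diff_le)
  also have "(\<Sum>i=0..r. real (r choose Suc i) * nabla (Suc i) x (k + r - i))
      = (\<Sum>i=0..Suc r. real (r choose i) * nabla i x (Suc k + r - i)) - nabla 0 x (Suc k + r)"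
    by (subst sum.atLeast0_atMost_Suc_shift) (simp add: Suc_diff_le)
  also have "(\<Sum>i=0..Suc r. real (r choose i) * nabla i x (Suc k + r - i))
      = (\<Sum>i=0..r. real (r choose i) * nabla i x (Suc k + r - i))"
    by (subst sum.atLeast0_atMost_Suc) simp
  finally show ?case using Suc.IH[of k] Suc.IH[of "Suc k"] by simp
qed

lemma Fbar_prod:
  assumes N: "\<forall>k\<in>{1..d}. n k \<le> N"
  shows "Fbar d \<beta> n = (\<Prod>t<N. (\<lambda>m. if m = 0 then 1 else \<beta> m) (card {k\<in>{1..d}. t < n k}))"
proof -
  define X where "X = (\<lambda>m. if m = 0 then 1 else \<beta> m)"
  define L where "L = sort (map n [1..<d+1])"
  have lenL: "length L = d" by (simp add: L_def)
  have sortedL: "sorted L" by (simp add: L_def)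
  have setL: "set L = n ` {1..d}" by (auto simp: L_def)
  define c where "c t = card {k\<in>{1..d}. n k \<le> t}" for t
  have cL: "c t = card {i. i < d \<and> L!i \<le> t}" for t
  proof -
    have "length (filter (\<lambda>v. v \<le> t) L) = length (filter (\<lambda>v. v \<le> t) (map n [1..<d+1]))"
      unfolding L_def by (metis filter_sort length_sort)
    also have "\<dots> = length (filter (\<lambda>k. n k \<le> t) [1..<d+1])"
      by (simp add: filter_map comp_def)
    also have "\<dots> = c t"
      by (subst distinct_length_filter) (auto simp: c_def intro!: arg_cong[where f=card])
    finally show ?thesis by (simp add: length_filter_conv_card lenL)
  qed
  have key: "L!i \<le> t \<longleftrightarrow> i < c t" if "i < d" for i t
  proof
    assume a: "L!i \<le> t"
    have "{..i} \<subseteq> {i. i < d \<and> L!i \<le> t}"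
      using a that sortedL lenL by (auto intro: order_trans[OF sorted_nth_mono])
    from card_mono[OF _ this] show "i < c t" unfolding cL by simp
  next
    assume a: "i < c t"
    show "L!i \<le> t"
    proof (rule ccontr)
      assume b: "\<not> L!i \<le> t"
      have "{i. i < d \<and> L!i \<le> t} \<subseteq> {..<i}"
      proof
        fix j assume "j \<in> {i. i < d \<and> L!i \<le> t}"
        then have "j < d" "L!j \<le> t" by auto
        show "j \<in> {..<i}"
        proof (rule ccontr)
          assume "j \<notin> {..<i}"
          then have "L!i \<le> L!j" using sortedL lenL \<open>j < d\<close> by (auto intro: sorted_nth_mono)
          then show False using b \<open>L!j \<le> t\<close> by simp
        qed
      qed
      from card_mono[OF _ this] a show False unfolding cL by simp
    qed
  qed
  have c_le: "c t \<le> d" for t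
    unfolding c_def by (rule order_trans[OF card_mono[of "{1..d}"]]) auto
  have cardS: "card {k\<in>{1..d}. t < n k} = d - c t" for t
  proof -
    have e: "{k\<in>{1..d}. t < n k} = {1..d} - {k\<in>{1..d}. n k \<le> t}" by auto
    have "card ({1..d} - {k\<in>{1..d}. n k \<le> t}) = card {1..d} - card {k\<in>{1..d}. n k \<le> t}"
      by (rule card_Diff_subset) auto
    then show ?thesis unfolding c_def e by simp
  qed
  define os where "os = ord_stat d n"
  have os_eq: "os j = (if j = 0 then 0 else L!(j-1))" for j
    by (simp add: os_def ord_stat_def L_def)
  have LN: "L!j \<le> N" if "j < d" for j
    using nth_mem[of j L] that lenL setL N by auto
  have cnt: "card {t \<in> {..<N}. d - c t = m} = os (d - m + 1) - os (d - m)" if m: "m \<in> {1..d}" for m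
  proof -
    define j where "j = d - m"
    have jd: "j < d" using m by (auto simp: j_def)
    have "{t \<in> {..<N}. d - c t = m} = {os j..<os (Suc j)}"
    proof (intro set_eqI iffI)
      fix t assume "t \<in> {t \<in> {..<N}. d - c t = m}"
      then have ct: "c t = j" using c_le[of t] m by (auto simp: j_def)
      have "os j \<le> t"
      proof (cases j)
        case 0 then show ?thesis by (simp add: os_eq)
      next
        case (Suc j') then show ?thesis using key[of j' t] ct jd by (simp add: os_eq)
      qed
      moreover have "t < os (Suc j)" using key[of j t] ct jd by (simp add: os_eq)
      ultimately show "t \<in> {os j..<os (Suc j)}" by simp
    next
      fix t assume "t \<in> {os j..<os (Suc j)}"
      then have t1: "os j \<le> t" and t2: "t < L!j" by (auto simp: os_eq)
      have "t < N" using t2 LN[OF jd] by simp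
      moreover have "\<not> j < c t" using key[of j t] t2 jd by simp
      moreover have "j \<le> c t"
      proof (cases j)
        case 0 then show ?thesis by simp
      next
        case (Suc j') then show ?thesis using key[of j' t] t1 jd by (simp add: os_eq)
      qed
      ultimately show "t \<in> {t \<in> {..<N}. d - c t = m}" using m by (auto simp: j_def)
    qed
    then show ?thesis using m by (simp add: j_def Suc_diff_le)
  qed
  have "(\<Prod>t<N. X (card {k\<in>{1..d}. t < n k})) = (\<Prod>t<N. X (d - c t))"
    by (simp only: cardS)
  also have "\<dots> = (\<Prod>m\<in>{0..d}. \<Prod>t\<in>{t \<in> {..<N}. d - c t = m}. X (d - c t))"
    by (rule prod.group[symmetric]) auto
  also have "\<dots> = (\<Prod>m\<in>{0..d}. X m ^ card {t \<in> {..<N}. d - c t = m})"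
    by (intro prod.cong refl) simp
  also have "\<dots> = (\<Prod>m\<in>{1..d}. X m ^ card {t \<in> {..<N}. d - c t = m})"
    by (subst prod.atLeast_Suc_atMost) (simp_all add: X_def)
  also have "\<dots> = (\<Prod>m\<in>{1..d}. \<beta> m ^ (os (d - m + 1) - os (d - m)))"
  proof (intro prod.cong refl)
    fix m assume m: "m \<in> {1..d}"
    show "X m ^ card {t \<in> {..<N}. d - c t = m} = \<beta> m ^ (os (d - m + 1) - os (d - m))"
      unfolding cnt[OF m] using m by (simp add: X_def)
  qed
  also have "\<dots> = Fbar d \<beta> n" by (simp add: Fbar_def os_def)
  finally show ?thesis unfolding X_def by (rule sym)
qed

lemma stream_prod:
  fixes q :: "'a pmf"
  shows "measure (stream_space (measure_pmf q))
     {\<omega> \<in> space (stream_space (measure_pmf q)). \<forall>t<N. \<omega> !! t \<in> C t}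
    = (\<Prod>t<N. measure_pmf.prob q (C t))"
proof (induction N arbitrary: C)
  case 0
  interpret S: prob_space "stream_space (measure_pmf q)"
    by (rule prob_space.prob_space_stream_space[OF measure_pmf.prob_space_axioms])
  show ?case by (simp add: S.prob_space)
next
  case (Suc N)
  interpret S: prob_space "stream_space (measure_pmf q)"
    by (rule prob_space.prob_space_stream_space[OF measure_pmf.prob_space_axioms])
  have meas: "{\<omega> \<in> space (stream_space (measure_pmf q)). \<forall>t<Suc N. \<omega> !! t \<in> C t}
     \<in> sets (stream_space (measure_pmf q))"
  proof -
    have [measurable]: "Measurable.pred (stream_space (measure_pmf q)) (\<lambda>\<omega>. \<omega> !! t \<in> C t)" for t
      by (rule measurable_compose[OF measurable_snth]) simp
    show ?thesis by measurable
  qed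
  have eq: "(\<forall>s<Suc N. (x ## \<omega>) !! s \<in> C s) \<longleftrightarrow> x \<in> C 0 \<and> (\<forall>s<N. \<omega> !! s \<in> C (Suc s))" for x \<omega>
    by (auto simp: All_less_Suc2 Stream_snth split: nat.splits)
  have "ennreal (measure (stream_space (measure_pmf q))
     {\<omega> \<in> space (stream_space (measure_pmf q)). \<forall>t<Suc N. \<omega> !! t \<in> C t})
    = (\<integral>\<^sup>+x. ennreal (measure (stream_space (measure_pmf q))
        {\<omega> \<in> space (stream_space (measure_pmf q)). \<forall>t<Suc N. (x ## \<omega>) !! t \<in> C t}) \<partial>measure_pmf q)"
    by (rule prob_space.prob_stream_space[OF measure_pmf.prob_space_axioms meas])
  also have "\<dots> = (\<integral>\<^sup>+x. ennreal (\<Prod>t<N. measure_pmf.prob q (C (Suc t))) * indicator (C 0) x \<partial>measure_pmf q)"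
  proof (intro nn_integral_cong)
    fix x
    show "ennreal (measure (stream_space (measure_pmf q))
        {\<omega> \<in> space (stream_space (measure_pmf q)). \<forall>t<Suc N. (x ## \<omega>) !! t \<in> C t})
       = ennreal (\<Prod>t<N. measure_pmf.prob q (C (Suc t))) * indicator (C 0) x"
      unfolding eq using Suc.IH[of "\<lambda>t. C (Suc t)"] by (auto split: split_indicator)
  qed
  also have "\<dots> = ennreal (\<Prod>t<N. measure_pmf.prob q (C (Suc t))) * emeasure (measure_pmf q) (C 0)"
    by (subst nn_integral_cmult_indicator) auto
  also have "\<dots> = ennreal (measure_pmf.prob q (C 0) * (\<Prod>t<N. measure_pmf.prob q (C (Suc t))))"
    by (simp add: measure_pmf.emeasure_eq_measure ennreal_mult'[symmetric] prod_nonneg mult.commute)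
  also have "measure_pmf.prob q (C 0) * (\<Prod>t<N. measure_pmf.prob q (C (Suc t))) = (\<Prod>t<Suc N. measure_pmf.prob q (C t))"
    by (simp only: prod.lessThan_Suc_shift)
  finally show ?case by (simp add: prod_nonneg)
qed

lemma tau_gt: "enat m < wsg_tau \<omega> k \<longleftrightarrow> (\<forall>t<m. k \<notin> \<omega> !! t)"
proof (cases "\<exists>t. k \<in> \<omega> !! t")
  case True
  define L where "L = (LEAST t. k \<in> \<omega> !! t)"
  have L: "k \<in> \<omega> !! L" unfolding L_def using True by (rule LeastI_ex)
  have "enat m < wsg_tau \<omega> k \<longleftrightarrow> m \<le> L" using True by (simp add: wsg_tau_def L_def less_Suc_eq_le)
  also have "\<dots> \<longleftrightarrow> (\<forall>t<m. k \<notin> \<omega> !! t)"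
  proof
    assume "m \<le> L" then show "\<forall>t<m. k \<notin> \<omega> !! t"
      unfolding L_def by (metis not_less_Least order_less_le_trans)
  next
    assume "\<forall>t<m. k \<notin> \<omega> !! t" then show "m \<le> L" using L by (meson not_less)
  qed
  finally show ?thesis .
qed (simp add: wsg_tau_def)


lemma snth_pred[measurable]: "Measurable.pred (stream_space (measure_pmf q)) (\<lambda>\<omega>. \<omega> !! t \<in> C)"
  by (rule measurable_compose[OF measurable_snth]) simp

lemma snth_pred2[measurable]: "Measurable.pred (stream_space (count_space UNIV)) (\<lambda>\<omega>. \<omega> !! t \<in> C)"
  by (rule measurable_compose[OF measurable_snth]) simp

lemma snth_pred3[measurable]: "Measurable.pred (stream_space (count_space UNIV)) (\<lambda>\<omega>. k \<in> \<omega> !! t)"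
  by (rule measurable_compose[OF measurable_snth]) simp

lemma wsg_survival_prod:
  assumes "\<forall>k\<in>{1..d}. n k \<le> N"
  shows "wsg_survival d q n = (\<Prod>t<N. measure_pmf.prob q {I. \<forall>k\<in>{1..d}. t < n k \<longrightarrow> k \<notin> I})"
proof -
  have eq: "{\<omega> \<in> space (stream_space (measure_pmf q)). \<forall>k\<in>{1..d}. enat (n k) < wsg_tau \<omega> k}
    = {\<omega> \<in> space (stream_space (measure_pmf q)). \<forall>t<N. \<omega> !! t \<in> {I. \<forall>k\<in>{1..d}. t < n k \<longrightarrow> k \<notin> I}}"
    using assms by (auto simp: tau_gt)
  show ?thesis unfolding wsg_survival_def eq by (rule stream_prod)
qed

lemma tau_finite_AE:
  assumes c1: "measure_pmf.prob q {I. k \<notin> I} < 1"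
  shows "AE \<omega> in stream_space (measure_pmf q). \<exists>t. k \<in> \<omega> !! t"
proof -
  define S where "S = stream_space (measure_pmf q)"
  interpret S: prob_space S unfolding S_def
    by (rule prob_space.prob_space_stream_space[OF measure_pmf.prob_space_axioms])
  define c where "c = measure_pmf.prob q {I. k \<notin> I}"
  have meas: "{\<omega>\<in>space S. \<not> (\<exists>t. k \<in> \<omega> !! t)} \<in> sets S" unfolding S_def by measurable
  have le: "measure S {\<omega>\<in>space S. \<not> (\<exists>t. k \<in> \<omega> !! t)} \<le> c ^ m" for m
  proof -
    have "measure S {\<omega>\<in>space S. \<not> (\<exists>t. k \<in> \<omega> !! t)} \<le> measure S {\<omega>\<in>space S. \<forall>t<m. \<omega> !! t \<in> {I. k \<notin> I}}"
      by (rule S.finite_measure_mono) (auto simp: S_def)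
    also have "\<dots> = c ^ m" unfolding S_def c_def using stream_prod[of q m "\<lambda>_. {I. k \<notin> I}"] by simp
    finally show ?thesis .
  qed
  have "(\<lambda>m. c ^ m) \<longlonglongrightarrow> 0" by (rule LIMSEQ_power_zero) (use c1 in \<open>simp add: c_def\<close>)
  then have "measure S {\<omega>\<in>space S. \<not> (\<exists>t. k \<in> \<omega> !! t)} \<le> 0"
    by (rule LIMSEQ_le_const) (use le in auto)
  then have "emeasure S {\<omega>\<in>space S. \<not> (\<exists>t. k \<in> \<omega> !! t)} = 0"
    by (metis S.emeasure_eq_measure antisym measure_nonneg ennreal_0)
  then show ?thesis unfolding S_def[symmetric] by (subst AE_iff_measurable[OF meas refl])
qed

definition tauN :: "nat \<Rightarrow> nat set stream \<Rightarrow> nat \<Rightarrow> nat" where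
  "tauN d \<omega> i = (if i \<in> {1..d} then (if \<exists>t. i \<in> \<omega> !! t then Suc (LEAST t. i \<in> \<omega> !! t) else 1) else 0)"

lemma wsg_discrete:
  assumes "wsg_params d q"
  shows "is_discrete_survival d (wsg_survival d q)"
proof -
  define S where "S = stream_space (measure_pmf q)"
  interpret S: prob_space S unfolding S_def
    by (rule prob_space.prob_space_stream_space[OF measure_pmf.prob_space_axioms])
  define V where "V = {f::nat\<Rightarrow>nat. (\<forall>i\<in>{1..d}. 1 \<le> f i) \<and> (\<forall>i. i \<notin> {1..d} \<longrightarrow> f i = 0)}"
  have "V \<subseteq> (\<lambda>g i. if i \<in> {1..d} then g i else 0) ` ({1..d} \<rightarrow>\<^sub>E (UNIV::nat set))"
  proof
    fix f assume f: "f \<in> V"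
    have "f = (\<lambda>i. if i \<in> {1..d} then restrict f {1..d} i else 0)"
      using f by (auto simp: V_def fun_eq_iff)
    then show "f \<in> (\<lambda>g i. if i \<in> {1..d} then g i else 0) ` ({1..d} \<rightarrow>\<^sub>E (UNIV::nat set))"
      by (intro image_eqI[where x="restrict f {1..d}"]) auto
  qed
  then have cV: "countable V"
    by (rule countable_subset) (intro countable_image countable_PiE; simp)
  have TV: "tauN d \<omega> \<in> V" for \<omega> by (auto simp: V_def tauN_def)
  have Ti[measurable]: "(\<lambda>\<omega>. tauN d \<omega> i) \<in> S \<rightarrow>\<^sub>M count_space UNIV" for i
    unfolding tauN_def S_def by measurable
  have sing: "{\<omega>\<in>space S. tauN d \<omega> = v} \<in> sets S" for v
  proof -
    have "{\<omega>\<in>space S. tauN d \<omega> = v} = {\<omega>\<in>space S. \<forall>i. tauN d \<omega> i = v i}" by (auto simp: fun_eq_iff)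
    also have "\<dots> \<in> sets S" by measurable
    finally show ?thesis .
  qed
  have Tmeas: "tauN d \<in> S \<rightarrow>\<^sub>M count_space UNIV"
  proof (rule measurableI)
    fix A :: "(nat \<Rightarrow> nat) set"
    have "tauN d -` A \<inter> space S = (\<Union>v\<in>A\<inter>V. {\<omega>\<in>space S. tauN d \<omega> = v})" using TV by auto
    also have "\<dots> \<in> sets S"
      by (intro sets.countable_UN' countable_Int2 cV) (auto intro: sing)
    finally show "tauN d -` A \<inter> space S \<in> sets S" .
  qed simp
  define M' where "M' = distr S (count_space UNIV) (tauN d)"
  have pM': "prob_space M'" unfolding M'_def by (rule S.prob_space_distr[OF Tmeas])
  interpret M': prob_space M' by (rule pM')
  have sM': "sets M' = UNIV" by (simp add: M'_def)
  have aeV: "AE x in M'. x \<in> V" unfolding M'_def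
    by (subst AE_distr_iff[OF Tmeas]) (simp_all add: TV)
  have ae: "AE x in M'. measure M' {x} \<noteq> 0"
    using M'.AE_support_countable[OF sM'] cV aeV by blast
  define P where "P = Abs_pmf M'"
  have PM: "measure_pmf P = M'" unfolding P_def by (rule Abs_pmf_inverse) (simp add: pM' sM' ae)
  have probP: "measure_pmf.prob P A = measure S (tauN d -` A \<inter> space S)" for A
    using PM measure_distr[OF Tmeas, of A] by (simp add: M'_def)
  have aefin: "AE \<omega> in S. \<forall>k\<in>{1..d}. \<exists>t. k \<in> \<omega> !! t"
    using assms unfolding wsg_params_def S_def by (subst AE_finite_all) (auto intro: tau_finite_AE)
  show ?thesis unfolding is_discrete_survival_def
  proof (intro exI[of _ P] conjI allI)
    show "set_pmf P \<subseteq> {t. (\<forall>i\<in>{1..d}. 1 \<le> t i) \<and> (\<forall>i. i \<notin> {1..d} \<longrightarrow> t i = 0)}"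
    proof
      fix x assume x: "x \<in> set_pmf P"
      show "x \<in> {t. (\<forall>i\<in>{1..d}. 1 \<le> t i) \<and> (\<forall>i. i \<notin> {1..d} \<longrightarrow> t i = 0)}"
      proof (rule ccontr)
        assume "x \<notin> {t. (\<forall>i\<in>{1..d}. 1 \<le> t i) \<and> (\<forall>i. i \<notin> {1..d} \<longrightarrow> t i = 0)}"
        then have "x \<notin> V" by (simp add: V_def)
        then have "tauN d -` {x} \<inter> space S = {}" using TV by auto
        then have "pmf P x = 0" using probP[of "{x}"] by (simp add: pmf.rep_eq)
        then show False using x by (simp add: set_pmf_iff)
      qed
    qed
  next
    fix n :: "nat \<Rightarrow> nat"
    have A: "tauN d -` {t. \<forall>i\<in>{1..d}. n i < t i} \<inter> space S = {\<omega>\<in>space S. \<forall>i\<in>{1..d}. n i < tauN d \<omega> i}"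
      by auto
    have Ameas: "{\<omega>\<in>space S. \<forall>i\<in>{1..d}. n i < tauN d \<omega> i} \<in> sets S"
      unfolding A[symmetric] by (rule measurable_sets[OF Tmeas]) simp
    have B: "{\<omega>\<in>space S. \<forall>k\<in>{1..d}. enat (n k) < wsg_tau \<omega> k} = {\<omega>\<in>space S. \<forall>k\<in>{1..d}. \<forall>t<n k. k \<notin> \<omega> !! t}"
      by (simp add: tau_gt)
    have Bmeas: "{\<omega>\<in>space S. \<forall>k\<in>{1..d}. enat (n k) < wsg_tau \<omega> k} \<in> sets S"
      unfolding B unfolding S_def by measurable
    have "measure_pmf.prob P {t. \<forall>i\<in>{1..d}. n i < t i} = measure S {\<omega>\<in>space S. \<forall>i\<in>{1..d}. n i < tauN d \<omega> i}"
      unfolding probP A by (rule refl)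
    also have "\<dots> = measure S {\<omega>\<in>space S. \<forall>k\<in>{1..d}. enat (n k) < wsg_tau \<omega> k}"
    proof (rule measure_eq_AE[OF _ Ameas Bmeas])
      show "AE \<omega> in S. (\<omega> \<in> {\<omega>\<in>space S. \<forall>i\<in>{1..d}. n i < tauN d \<omega> i}) =
                       (\<omega> \<in> {\<omega>\<in>space S. \<forall>k\<in>{1..d}. enat (n k) < wsg_tau \<omega> k})"
        using aefin by eventually_elim (auto simp: tauN_def wsg_tau_def)
    qed
    also have "\<dots> = wsg_survival d q n" by (simp add: wsg_survival_def S_def)
    finally show "measure_pmf.prob P {t. \<forall>i\<in>{1..d}. n i < t i} = wsg_survival d q n" .
  qed
qed

lemma sum_pow_card:
  assumes T: "T \<subseteq> {1..d}"
  shows "(\<Sum>I\<in>Pow T. nabla (card I) x (d - card I)) = x (d - card T)"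
proof -
  have fT: "finite T" using T finite_subset by blast
  define r where "r = card T"
  have rd: "r \<le> d" unfolding r_def using card_mono[OF _ T] by simp
  have "(\<Sum>I\<in>Pow T. nabla (card I) x (d - card I))
      = (\<Sum>i\<in>{0..r}. \<Sum>I\<in>{I. I \<in> Pow T \<and> card I = i}. nabla (card I) x (d - card I))"
    by (rule sum.group[symmetric]) (use fT in \<open>auto simp: r_def intro: card_mono\<close>)
  also have "\<dots> = (\<Sum>i\<in>{0..r}. real (r choose i) * nabla i x (d - i))"
  proof (intro sum.cong refl)
    fix i
    have "{I. I \<in> Pow T \<and> card I = i} = {B. B \<subseteq> T \<and> card B = i}" by auto
    then show "(\<Sum>I\<in>{I. I \<in> Pow T \<and> card I = i}. nabla (card I) x (d - card I)) = real (r choose i) * nabla i x (d - i)"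
      using n_subsets[OF fT, of i] by (simp add: r_def)
  qed
  also have "\<dots> = (\<Sum>i\<in>{0..r}. real (r choose i) * nabla i x ((d - r) + r - i))"
    using rd by simp
  also have "\<dots> = x (d - r)" by (rule binom_inv)
  finally show ?thesis by (simp add: r_def)
qed

lemma construct:
  assumes d: "1 \<le> d" and M: "in_M d x" and x0: "x = (\<lambda>i. if i = 0 then 1 else \<beta> i)"
  shows "\<exists>q. wsg_params d q \<and> wsg_exchangeable d q \<and> (\<forall>n. wsg_survival d q n = Fbar d \<beta> n)"
proof -
  define p where "p i = nabla i x (d - i)" for i
  have p_nn: "0 \<le> p i" if "i \<le> d" for i
    using M that unfolding in_M_def p_def by (metis diff_diff_cancel diff_le_self order_refl)
  define f where "f I = (if I \<subseteq> {1..d} then p (card I) else 0)" for I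
  have sumT: "(\<Sum>I\<in>Pow T. f I) = x (d - card T)" if "T \<subseteq> {1..d}" for T
  proof -
    have "(\<Sum>I\<in>Pow T. f I) = (\<Sum>I\<in>Pow T. nabla (card I) x (d - card I))"
      using that by (intro sum.cong refl) (auto simp: f_def p_def)
    then show ?thesis using sum_pow_card[OF that] by simp
  qed
  have f_nn: "0 \<le> f I" for I
    unfolding f_def using p_nn card_mono[of "{1..d}" I] by auto
  have f_int: "(\<integral>\<^sup>+I. ennreal (f I) \<partial>count_space UNIV) = 1"
  proof -
    have "(\<integral>\<^sup>+I. ennreal (f I) \<partial>count_space UNIV) = (\<Sum>I\<in>Pow {1..d}. ennreal (f I))"
      by (rule nn_integral_count_space') (auto simp: f_def)
    also have "\<dots> = ennreal (\<Sum>I\<in>Pow {1..d}. f I)" using f_nn by simp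
    also have "\<dots> = 1" using sumT[of "{1..d}"] by (simp add: x0)
    finally show ?thesis .
  qed
  define q where "q = embed_pmf f"
  have pmfq: "pmf q I = f I" for I unfolding q_def by (rule pmf_embed_pmf[OF f_nn f_int])
  have setq: "set_pmf q \<subseteq> Pow {1..d}"
    unfolding q_def set_embed_pmf[OF f_nn f_int] by (auto simp: f_def split: if_splits)
  have probq: "measure_pmf.prob q A = (\<Sum>I\<in>A \<inter> Pow {1..d}. f I)" for A
  proof -
    have "measure_pmf.prob q A = measure_pmf.prob q (A \<inter> set_pmf q)" by (rule measure_Int_set_pmf[symmetric])
    also have "A \<inter> set_pmf q = (A \<inter> Pow {1..d}) \<inter> set_pmf q" using setq by auto
    also have "measure_pmf.prob q \<dots> = measure_pmf.prob q (A \<inter> Pow {1..d})" by (rule measure_Int_set_pmf)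
    also have "\<dots> = (\<Sum>I\<in>A \<inter> Pow {1..d}. f I)" by (simp add: measure_measure_pmf_finite pmfq)
    finally show ?thesis .
  qed
  have params: "wsg_params d q"
    unfolding wsg_params_def
  proof (intro conjI ballI setq)
    fix k assume k: "k \<in> {1..d}"
    have "{I. k \<notin> I} \<inter> Pow {1..d} = Pow ({1..d} - {k})" by auto
    then have "measure_pmf.prob q {I. k \<notin> I} = x (d - card ({1..d} - {k}))"
      using probq sumT[of "{1..d} - {k}"] by auto
    also have "\<dots> = x 1" using k d by simp
    finally show "measure_pmf.prob q {I. k \<notin> I} < 1" using M by (simp add: in_M_def)
  qed
  have exch: "wsg_exchangeable d q"
    unfolding wsg_exchangeable_def by (simp add: pmfq f_def)
  have surv: "wsg_survival d q n = Fbar d \<beta> n" for n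
  proof -
    define N where "N = (\<Sum>k\<in>{1..d}. n k)"
    have nN: "\<forall>k\<in>{1..d}. n k \<le> N" unfolding N_def by (auto intro: member_le_sum)
    have "wsg_survival d q n = (\<Prod>t<N. measure_pmf.prob q {I. \<forall>k\<in>{1..d}. t < n k \<longrightarrow> k \<notin> I})"
      by (rule wsg_survival_prod[OF nN])
    also have "\<dots> = (\<Prod>t<N. x (card {k\<in>{1..d}. t < n k}))"
    proof (intro prod.cong refl)
      fix t
      define St where "St = {k\<in>{1..d}. t < n k}"
      have cS: "card St \<le> d" unfolding St_def by (rule order_trans[OF card_mono[of "{1..d}"]]) auto
      have "{I. \<forall>k\<in>{1..d}. t < n k \<longrightarrow> k \<notin> I} \<inter> Pow {1..d} = Pow ({1..d} - St)"
        by (auto simp: St_def)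
      then have "measure_pmf.prob q {I. \<forall>k\<in>{1..d}. t < n k \<longrightarrow> k \<notin> I} = x (d - card ({1..d} - St))"
        using probq sumT[of "{1..d} - St"] by auto
      also have "card ({1..d} - St) = d - card St"
        by (subst card_Diff_subset) (auto simp: St_def)
      finally show "measure_pmf.prob q {I. \<forall>k\<in>{1..d}. t < n k \<longrightarrow> k \<notin> I} = x (card {k\<in>{1..d}. t < n k})"
        using cS by (simp add: St_def)
    qed
    also have "\<dots> = Fbar d \<beta> n" unfolding x0 by (rule Fbar_prod[OF nN, symmetric])
    finally show ?thesis .
  qed
  show ?thesis using params exch surv by blast
qed

lemma Fbar_ind:
  assumes A: "A \<subseteq> {1..d}"
  shows "Fbar d \<beta> (\<lambda>i. if i \<in> A then m else 0) = (if card A = 0 then 1 else \<beta> (card A)) ^ m"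
proof -
  have "Fbar d \<beta> (\<lambda>i. if i \<in> A then m else 0)
      = (\<Prod>t<m. (\<lambda>c. if c = 0 then 1 else \<beta> c) (card {k\<in>{1..d}. t < (if k \<in> A then m else 0)}))"
    by (rule Fbar_prod) auto
  also have "\<dots> = (\<Prod>t<m. (if card A = 0 then 1 else \<beta> (card A)))"
  proof (intro prod.cong refl)
    fix t assume "t \<in> {..<m}"
    then have "{k\<in>{1..d}. t < (if k \<in> A then m else 0)} = A" using A by auto
    then show "(\<lambda>c. if c = 0 then 1 else \<beta> c) (card {k\<in>{1..d}. t < (if k \<in> A then m else 0)}) = (if card A = 0 then 1 else \<beta> (card A))"
      by simp
  qed
  finally show ?thesis by simp
qed

lemma necessity:
  assumes d: "1 \<le> d" and S: "is_discrete_survival d (Fbar d \<beta>)"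
  shows "in_M d (\<lambda>i. if i = 0 then 1 else \<beta> i)"
proof -
  define x where "x = (\<lambda>i::nat. if i = 0 then 1 else \<beta> i)"
  obtain P :: "(nat \<Rightarrow> nat) pmf" where supp: "set_pmf P \<subseteq> {t. (\<forall>i\<in>{1..d}. 1 \<le> t i) \<and> (\<forall>i. i \<notin> {1..d} \<longrightarrow> t i = 0)}"
    and surv: "\<And>n. measure_pmf.prob P {t. \<forall>i\<in>{1..d}. n i < t i} = Fbar d \<beta> n"
    using S unfolding is_discrete_survival_def by blast
  have eqsupp: "measure_pmf.prob P X = measure_pmf.prob P Y" if "X \<inter> set_pmf P = Y \<inter> set_pmf P" for X Y
    by (metis measure_Int_set_pmf that)
  have indA: "measure_pmf.prob P {t. \<forall>i\<in>A. m < t i} = x (card A) ^ m" if A: "A \<subseteq> {1..d}" for A m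
  proof -
    have "measure_pmf.prob P {t. \<forall>i\<in>A. m < t i} = measure_pmf.prob P {t. \<forall>i\<in>{1..d}. (if i \<in> A then m else 0) < t i}"
    proof (rule eqsupp)
      show "{t. \<forall>i\<in>A. m < t i} \<inter> set_pmf P = {t. \<forall>i\<in>{1..d}. (if i \<in> A then m else 0) < t i} \<inter> set_pmf P"
        using supp A by fastforce
    qed
    also have "\<dots> = x (card A) ^ m" unfolding surv by (simp add: Fbar_ind[OF A] x_def)
    finally show ?thesis .
  qed
  define E where "E A B = {t::nat\<Rightarrow>nat. (\<forall>i\<in>A. 1 < t i) \<and> (\<forall>i\<in>B. t i \<le> 1)}" for A B
  have EP: "measure_pmf.prob P (E A B) = nabla (card B) x (card A)"
    if "finite B" "A \<inter> B = {}" "A \<union> B \<subseteq> {1..d}" for A B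
    using that
  proof (induction B arbitrary: A rule: finite_induct)
    case empty
    then have "measure_pmf.prob P (E A {}) = x (card A) ^ 1" unfolding E_def using indA[of A 1] by simp
    then show ?case by simp
  next
    case (insert b B)
    have bA: "b \<notin> A" using insert.prems by auto
    have fA: "finite A" using insert.prems finite_subset by blast
    have un: "E A B = E A (insert b B) \<union> E (insert b A) B" unfolding E_def by auto
    have dj: "E A (insert b B) \<inter> E (insert b A) B = {}" unfolding E_def by auto
    have "measure_pmf.prob P (E A B) = measure_pmf.prob P (E A (insert b B)) + measure_pmf.prob P (E (insert b A) B)"
      unfolding un by (rule measure_pmf.finite_measure_Union[OF _ _ dj]) simp_all
    moreover have "measure_pmf.prob P (E A B) = nabla (card B) x (card A)"
      using insert.IH[of A] insert.prems by auto
    moreover have "measure_pmf.prob P (E (insert b A) B) = nabla (card B) x (Suc (card A))"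
      using insert.IH[of "insert b A"] insert.prems insert.hyps bA fA by auto
    ultimately show ?case using insert.hyps by (simp add: nabla_Suc)
  qed
  have nab: "0 \<le> nabla j x k" if "k \<le> d" "j \<le> d - k" for j k
  proof -
    have "nabla j x k = nabla (card {k+1..k+j}) x (card {1..k})" by simp
    also have "\<dots> = measure_pmf.prob P (E {1..k} {k+1..k+j})"
      by (rule EP[symmetric]) (use that in auto)
    finally show ?thesis by simp
  qed
  have b1: "\<beta> 1 < 1"
  proof (rule ccontr)
    assume "\<not> \<beta> 1 < 1"
    then have ge: "1 \<le> \<beta> 1 ^ m" for m by (simp add: one_le_power)
    define D where "D m = {t::nat\<Rightarrow>nat. \<forall>i\<in>{1}. m < t i}" for m
    have pD: "measure_pmf.prob P (D m) = \<beta> 1 ^ m" for m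
      unfolding D_def using indA[of "{1}" m] d by (simp add: x_def)
    have "(\<lambda>m. measure_pmf.prob P (D m)) \<longlonglongrightarrow> measure_pmf.prob P (\<Inter>m. D m)"
      by (rule measure_pmf.finite_Lim_measure_decseq) (auto simp: decseq_def D_def)
    moreover have "(\<Inter>m. D m) = {}"
    proof -
      have "t \<notin> D (t 1)" for t by (simp add: D_def)
      then show ?thesis by blast
    qed
    ultimately have "(\<lambda>m. \<beta> 1 ^ m) \<longlonglongrightarrow> 0" by (simp add: pD)
    then have "1 \<le> (0::real)" by (rule LIMSEQ_le_const) (use ge in auto)
    then show False by simp
  qed
  show ?thesis unfolding in_M_def using nab b1 by (simp add: x_def)
qed

theorem theorem3p2:
  fixes d :: nat and \<beta> :: "nat \<Rightarrow> real"
  assumes "1 \<le> d"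
  shows "(is_discrete_survival d (Fbar d \<beta>) \<longleftrightarrow> in_M d (\<lambda>i. if i = 0 then 1 else \<beta> i))
       \<and> (is_discrete_survival d (Fbar d \<beta>) \<longrightarrow>
           (\<exists>q. wsg_params d q \<and> wsg_exchangeable d q \<and> (\<forall>n. wsg_survival d q n = Fbar d \<beta> n)))"
proof -
  have B: "\<exists>q. wsg_params d q \<and> wsg_exchangeable d q \<and> (\<forall>n. wsg_survival d q n = Fbar d \<beta> n)"
    if "in_M d (\<lambda>i. if i = 0 then 1 else \<beta> i)"
    by (rule construct[OF assms that refl])
  have C: "is_discrete_survival d (Fbar d \<beta>)" if M: "in_M d (\<lambda>i. if i = 0 then 1 else \<beta> i)"
  proof -
    obtain q where q: "wsg_params d q" "\<forall>n. wsg_survival d q n = Fbar d \<beta> n" using B[OF M] by blast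
    have "wsg_survival d q = Fbar d \<beta>" using q(2) by auto
    then show ?thesis using wsg_discrete[OF q(1)] by simp
  qed
  show ?thesis using necessity[OF assms] B C by blast
qed

end
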